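(* Let $G$ be a finite group, and let $a_1,a_2,a_3,a_4$ be independent uniformly random elements of $G$. Then each of the probabilities \[ Pr(a_1a_2a_3a_4=a_3a_2a_4a_1),\quad Pr(a_1a_2a_3a_4=a_4a_2a_1a_3), \] \[ Pr(a_1a_2a_3a_4=a_2a_4a_3a_1),\quad Pr(a_1a_2a_3a_4=a_4a_1a_3a_2) \] equals $Pr^4(G)$, the probability that $a_1a_2a_3a_4=a_4a_3a_2a_1$. *)

theory Defs
  imports "HOL-Algebra.Group" Complex_Main
begin

definition prob4 :: "('a, 'b) monoid_scheme \<Rightarrow>
    ('a \<Rightarrow> 'a \<Rightarrow> 'a \<Rightarrow> 'a \<Rightarrow> bool) \<Rightarrow> real" where
  "prob4 G P = real (card {(a1, a2, a3, a4). a1 \<in> carrier G \<and> a2 \<in> carrier G \<and>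
       a3 \<in> carrier G \<and> a4 \<in> carrier G \<and> P a1 a2 a3 a4})
     / real (card (carrier G)) ^ 4"

definition Pr4 :: "('a, 'b) monoid_scheme \<Rightarrow> real" where
  "Pr4 G = prob4 G (\<lambda>a1 a2 a3 a4.
      a1 \<otimes>\<^bsub>G\<^esub> a2 \<otimes>\<^bsub>G\<^esub> a3 \<otimes>\<^bsub>G\<^esub> a4 =
      a4 \<otimes>\<^bsub>G\<^esub> a3 \<otimes>\<^bsub>G\<^esub> a2 \<otimes>\<^bsub>G\<^esub> a1)"

end

theory Submission
  imports Defs
begin

lemma card_transfer:
  assumes "\<And>t. t \<in> S \<Longrightarrow> f t \<in> S" "\<And>t. t \<in> S \<Longrightarrow> g t \<in> S"
    "\<And>t. t \<in> S \<Longrightarrow> g (f t) = t" "\<And>t. t \<in> S \<Longrightarrow> f (g t) = t"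
    "\<And>t. t \<in> S \<Longrightarrow> Q t \<longleftrightarrow> P (f t)"
  shows "card {t\<in>S. Q t} = card {t\<in>S. P t}"
proof -
  have "bij_betw f {t\<in>S. Q t} {t\<in>S. P t}"
    by (rule bij_betw_byWitness[where f'=g]) (use assms in force)+
  thus ?thesis by (rule bij_betw_same_card)
qed

context group begin

definition S4 where "S4 = carrier G \<times> carrier G \<times> carrier G \<times> carrier G"

lemma set_eq: "{(a1, a2, a3, a4). a1 \<in> carrier G \<and> a2 \<in> carrier G \<and>
       a3 \<in> carrier G \<and> a4 \<in> carrier G \<and> P a1 a2 a3 a4} = {t \<in> S4. case_prod (\<lambda>a1. case_prod (\<lambda>a2. case_prod (P a1 a2))) t}"
  unfolding S4_def by auto

abbreviation "RR \<equiv> (\<lambda>a1 a2 a3 a4. a1 \<otimes> a2 \<otimes> a3 \<otimes> a4 = a4 \<otimes> a3 \<otimes> a2 \<otimes> a1)"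

lemma transfer4:
  assumes "\<And>a1 a2 a3 a4. a1 \<in> carrier G \<Longrightarrow> a2 \<in> carrier G \<Longrightarrow> a3 \<in> carrier G \<Longrightarrow> a4 \<in> carrier G \<Longrightarrow>
      f a1 a2 a3 a4 \<in> S4 \<and> g a1 a2 a3 a4 \<in> S4 \<and>
      case_prod (\<lambda>b1. case_prod (\<lambda>b2. case_prod (g b1 b2))) (f a1 a2 a3 a4) = (a1,a2,a3,a4) \<and>
      case_prod (\<lambda>b1. case_prod (\<lambda>b2. case_prod (f b1 b2))) (g a1 a2 a3 a4) = (a1,a2,a3,a4) \<and>
      (Q a1 a2 a3 a4 \<longleftrightarrow> case_prod (\<lambda>b1. case_prod (\<lambda>b2. case_prod (RR b1 b2))) (f a1 a2 a3 a4))"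
  shows "prob4 G Q = prob4 G RR"
proof -
  have "card {t \<in> S4. case_prod (\<lambda>a1. case_prod (\<lambda>a2. case_prod (Q a1 a2))) t} =
        card {t \<in> S4. case_prod (\<lambda>a1. case_prod (\<lambda>a2. case_prod (RR a1 a2))) t}"
    apply (rule card_transfer[where f="case_prod (\<lambda>b1. case_prod (\<lambda>b2. case_prod (f b1 b2)))"
        and g="case_prod (\<lambda>b1. case_prod (\<lambda>b2. case_prod (g b1 b2)))"])
    using assms unfolding S4_def by auto
  thus ?thesis unfolding prob4_def set_eq by simp
qed

end

theorem mainTheorem8:
  fixes G (structure)
  assumes "group G" and "finite (carrier G)"
  shows "prob4 G (\<lambda>a1 a2 a3 a4. a1 \<otimes> a2 \<otimes> a3 \<otimes> a4 = a3 \<otimes> a2 \<otimes> a4 \<otimes> a1) = Pr4 G \<and>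
         prob4 G (\<lambda>a1 a2 a3 a4. a1 \<otimes> a2 \<otimes> a3 \<otimes> a4 = a4 \<otimes> a2 \<otimes> a1 \<otimes> a3) = Pr4 G \<and>
         prob4 G (\<lambda>a1 a2 a3 a4. a1 \<otimes> a2 \<otimes> a3 \<otimes> a4 = a2 \<otimes> a4 \<otimes> a3 \<otimes> a1) = Pr4 G \<and>
         prob4 G (\<lambda>a1 a2 a3 a4. a1 \<otimes> a2 \<otimes> a3 \<otimes> a4 = a4 \<otimes> a1 \<otimes> a3 \<otimes> a2) = Pr4 G"
proof -
  interpret group G by fact
  have A: "prob4 G (\<lambda>a1 a2 a3 a4. a1 \<otimes> a2 \<otimes> a3 \<otimes> a4 = a3 \<otimes> a2 \<otimes> a4 \<otimes> a1) = Pr4 G"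
    unfolding Pr4_def
  proof (rule transfer4[where f="\<lambda>a1 a2 a3 a4. (a4 \<otimes> a1, a2, a3, a4)" and g="\<lambda>a1 a2 a3 a4. (inv a4 \<otimes> a1, a2, a3, a4)"], goal_cases)
    case (1 a1 a2 a3 a4) note c = 1
    have "(a4 \<otimes> a1 \<otimes> a2 \<otimes> a3 \<otimes> a4 = a4 \<otimes> a3 \<otimes> a2 \<otimes> (a4 \<otimes> a1)) \<longleftrightarrow>
          (a4 \<otimes> (a1 \<otimes> a2 \<otimes> a3 \<otimes> a4) = a4 \<otimes> (a3 \<otimes> a2 \<otimes> a4 \<otimes> a1))"
      using c by (simp add: m_assoc)
    also have "\<dots> \<longleftrightarrow> a1 \<otimes> a2 \<otimes> a3 \<otimes> a4 = a3 \<otimes> a2 \<otimes> a4 \<otimes> a1"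
      using c by (intro Units_l_cancel) (auto simp: Units_eq)
    finally show ?case using c by (simp add: S4_def m_assoc[symmetric])
  qed
  have B: "prob4 G (\<lambda>a1 a2 a3 a4. a1 \<otimes> a2 \<otimes> a3 \<otimes> a4 = a4 \<otimes> a2 \<otimes> a1 \<otimes> a3) = Pr4 G"
    unfolding Pr4_def
  proof (rule transfer4[where f="\<lambda>a1 a2 a3 a4. (a1, a2, a3, a4 \<otimes> inv a3)" and g="\<lambda>a1 a2 a3 a4. (a1, a2, a3, a4 \<otimes> a3)"], goal_cases)
    case (1 a1 a2 a3 a4) note c = 1
    have "(a1 \<otimes> a2 \<otimes> a3 \<otimes> (a4 \<otimes> inv a3) = a4 \<otimes> inv a3 \<otimes> a3 \<otimes> a2 \<otimes> a1) \<longleftrightarrow>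
          (a1 \<otimes> a2 \<otimes> a3 \<otimes> (a4 \<otimes> inv a3) \<otimes> a3 = a4 \<otimes> inv a3 \<otimes> a3 \<otimes> a2 \<otimes> a1 \<otimes> a3)"
      using c by (intro right_cancel[symmetric]) auto
    also have "\<dots> \<longleftrightarrow> a1 \<otimes> a2 \<otimes> a3 \<otimes> a4 = a4 \<otimes> a2 \<otimes> a1 \<otimes> a3"
      using c by (simp add: m_assoc)
    finally show ?case using c by (simp add: S4_def m_assoc)
  qed
  have C: "prob4 G (\<lambda>a1 a2 a3 a4. a1 \<otimes> a2 \<otimes> a3 \<otimes> a4 = a2 \<otimes> a4 \<otimes> a3 \<otimes> a1) = Pr4 G"
    unfolding Pr4_def
  proof (rule transfer4[where f="\<lambda>a1 a2 a3 a4. (inv a2 \<otimes> a1, a2, a3, a4)" and g="\<lambda>a1 a2 a3 a4. (a2 \<otimes> a1, a2, a3, a4)"], goal_cases)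
    case (1 a1 a2 a3 a4) note c = 1
    have "(inv a2 \<otimes> a1 \<otimes> a2 \<otimes> a3 \<otimes> a4 = a4 \<otimes> a3 \<otimes> a2 \<otimes> (inv a2 \<otimes> a1)) \<longleftrightarrow>
          (a2 \<otimes> (inv a2 \<otimes> a1 \<otimes> a2 \<otimes> a3 \<otimes> a4) = a2 \<otimes> (a4 \<otimes> a3 \<otimes> a2 \<otimes> (inv a2 \<otimes> a1)))"
      using c by (intro Units_l_cancel[symmetric]) (auto simp: Units_eq)
    also have "\<dots> \<longleftrightarrow> a1 \<otimes> a2 \<otimes> a3 \<otimes> a4 = a2 \<otimes> a4 \<otimes> a3 \<otimes> a1"
    proof -
      have "a2 \<otimes> (inv a2 \<otimes> a1 \<otimes> a2 \<otimes> a3 \<otimes> a4) = a1 \<otimes> a2 \<otimes> a3 \<otimes> a4"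
        using c by (simp add: m_assoc[symmetric] r_inv)
      moreover have "a2 \<otimes> (a4 \<otimes> a3 \<otimes> a2 \<otimes> (inv a2 \<otimes> a1)) = a2 \<otimes> a4 \<otimes> a3 \<otimes> a1"
        using c by (simp add: m_assoc[symmetric]) (simp add: m_assoc r_inv)
      ultimately show ?thesis by simp
    qed
    finally have eq: "(inv a2 \<otimes> a1 \<otimes> a2 \<otimes> a3 \<otimes> a4 = a4 \<otimes> a3 \<otimes> a2 \<otimes> (inv a2 \<otimes> a1)) \<longleftrightarrow> a1 \<otimes> a2 \<otimes> a3 \<otimes> a4 = a2 \<otimes> a4 \<otimes> a3 \<otimes> a1" .
    show ?case using c by (simp add: S4_def eq) (simp add: m_assoc[symmetric])
  qed
  have D: "prob4 G (\<lambda>a1 a2 a3 a4. a1 \<otimes> a2 \<otimes> a3 \<otimes> a4 = a4 \<otimes> a1 \<otimes> a3 \<otimes> a2) = Pr4 G"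
    unfolding Pr4_def
  proof (rule transfer4[where f="\<lambda>a1 a2 a3 a4. (a1, a2, a3, a4 \<otimes> a1)" and g="\<lambda>a1 a2 a3 a4. (a1, a2, a3, a4 \<otimes> inv a1)"], goal_cases)
    case (1 a1 a2 a3 a4) note c = 1
    have "(a1 \<otimes> a2 \<otimes> a3 \<otimes> a4) \<otimes> a1 = (a4 \<otimes> a1 \<otimes> a3 \<otimes> a2) \<otimes> a1 \<longleftrightarrow> a1 \<otimes> a2 \<otimes> a3 \<otimes> a4 = a4 \<otimes> a1 \<otimes> a3 \<otimes> a2"
      using c by (intro right_cancel) auto
    moreover have "(a1 \<otimes> a2 \<otimes> a3 \<otimes> (a4 \<otimes> a1) = a4 \<otimes> a1 \<otimes> a3 \<otimes> a2 \<otimes> a1) \<longleftrightarrow>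
          (a1 \<otimes> a2 \<otimes> a3 \<otimes> a4) \<otimes> a1 = (a4 \<otimes> a1 \<otimes> a3 \<otimes> a2) \<otimes> a1"
      using c by (simp add: m_assoc)
    ultimately show ?case using c by (simp add: S4_def m_assoc)
  qed
  show ?thesis using A B C D by blast
qed

end
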